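(* Let $A+f(A)$ be the free pseudosolution of $(B\le A,f)$, where $B\le A$ (i.e. $B$ is strong in $A$). Then $A+f(B)\le A+f(A)$. If moreover $A$ is a minimal strong extension of $B$, then $A+f(A)$ is a minimal strong extension of $A+f(B)$.
   Context: All vector spaces are over a finite field $\mathbb{F}_q$; $\bigwedge^2X$ is the exterior square. A $2$-nilpotent graded Lie algebra is presented as $V\oplus\bigwedge^2V/N(V)$ with $N(V)\subseteq\bigwedge^2V$. For a linear map $g\colon X\to Y$ between subspaces of a common space, $\tilde g\colon\bigwedge^2X\to\bigwedge^2(X+Y)$ is the linear map with $\tilde g(x\wedge y)=g(x)\wedge y+x\wedge g(y)$. A partially defined graded derivation is a linear map $f\colon B\to V$, $B\subseteq V$ finite-dimensional, with $\tilde f(N(B))\subseteq N(V)$, where $N(X):=N(V)\cap\bigwedge^2X$. Free pseudosolution of $(B\le A,f)$ (finite-dimensional $B\subseteq A\subseteq V$): take an abstract space $U\supseteq A+f(B)$ with $\dim(U/(A+f(B)))=\dim(A/B)$, extend $f$ to linear $f\colon A\to U$ mapping a basis of $A$ over $B$ onto a basis of $U$ over $A+f(B)$ (so $U=A+f(A)$), and set $N(A+f(A)):=N(A+f(B))+\tilde f(N(A))$. For subspaces $X\subseteq A+f(A)$, $N(X):=N(A+f(A))\cap\bigwedge^2X$. Predimension: $\delta(X/Y):=\dim(X/Y)-\dim(N(X)/N(Y))$ for $Y\subseteq X$ with $X$ finite-dimensional over $Y$. Strongness: $Y\le X$ means $\delta(Z/Y)\ge0$ for every subspace $Y\subseteq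 Z\subseteq X$ finite-dimensional over $Y$. $X$ is a minimal strong extension of $Y$ if $Y\le X$, $Y\ne X$, and there is no subspace $Z$ with $Y\subsetneq Z\subsetneq X$ and $Z\le X$. *)

theory Defs
  imports Complex_Main "HOL-Library.Function_Algebras"
begin

text \<open>Exterior square: the library has none, so we use the standard faithful model
of the exterior square as alternating forms on pairs of linear functionals:
x wedge y is the map (phi,psi) |-> phi x * psi y - phi y * psi x (phi, psi linear).
The map from the abstract exterior square of the ambient space to this
function space is injective, so the span of the wedges x wedge y with x, y in X
is a faithful copy of the exterior square of X, compatibly for all subspaces X.\<close>

type_synonym ('a, 'v) ext2 = "('v \<Rightarrow> 'a) \<times> ('v \<Rightarrow> 'a) \<Rightarrow> 'a"

definition esc :: "'a::field \<Rightarrow> ('a, 'v) ext2 \<Rightarrow> ('a, 'v) ext2" where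
  "esc c F = (\<lambda>p. c * F p)"

definition wedge :: "('a::field \<Rightarrow> 'v::ab_group_add \<Rightarrow> 'v) \<Rightarrow> 'v \<Rightarrow> 'v \<Rightarrow> ('a, 'v) ext2" where
  "wedge sc x y = (\<lambda>(\<phi>, \<psi>).
     if Vector_Spaces.linear sc (*) \<phi> \<and> Vector_Spaces.linear sc (*) \<psi>
     then \<phi> x * \<psi> y - \<phi> y * \<psi> x else 0)"

definition Lam2 :: "('a::field \<Rightarrow> 'v::ab_group_add \<Rightarrow> 'v) \<Rightarrow> 'v set \<Rightarrow> ('a, 'v) ext2 set" where
  "Lam2 sc X = module.span esc {wedge sc x y | x y. x \<in> X \<and> y \<in> X}"

definition ssum :: "'b::ab_group_add set \<Rightarrow> 'b set \<Rightarrow> 'b set" where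
  "ssum X Y = {x + y | x y. x \<in> X \<and> y \<in> Y}"

definition linear_on :: "('a::field \<Rightarrow> 'v::ab_group_add \<Rightarrow> 'v) \<Rightarrow> 'v set \<Rightarrow> ('v \<Rightarrow> 'v) \<Rightarrow> bool" where
  "linear_on sc X g \<longleftrightarrow> (\<forall>x\<in>X. \<forall>y\<in>X. g (x + y) = g x + g y) \<and> (\<forall>c. \<forall>x\<in>X. g (sc c x) = sc c (g x))"

definition tilde :: "('a::field \<Rightarrow> 'v::ab_group_add \<Rightarrow> 'v) \<Rightarrow> ('v \<Rightarrow> 'v) \<Rightarrow> 'v set
    \<Rightarrow> ('a, 'v) ext2 \<Rightarrow> ('a, 'v) ext2" where
  "tilde sc g X = (SOME L. Vector_Spaces.linear esc esc L \<and>
      (\<forall>x\<in>X. \<forall>y\<in>X. L (wedge sc x y) = wedge sc (g x) y + wedge sc x (g y)))"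

definition Nof :: "('a::field \<Rightarrow> 'v::ab_group_add \<Rightarrow> 'v) \<Rightarrow> ('a, 'v) ext2 set \<Rightarrow> 'v set \<Rightarrow> ('a, 'v) ext2 set" where
  "Nof sc NW X = NW \<inter> Lam2 sc X"

text \<open>Predimension delta(X/Y) for Y \<subseteq> X with X finite-dimensional
(the only case needed here: then dim(X/Y) = dim X - dim Y etc.).\<close>
definition delta :: "('a::field \<Rightarrow> 'v::ab_group_add \<Rightarrow> 'v) \<Rightarrow> ('a, 'v) ext2 set \<Rightarrow> 'v set \<Rightarrow> 'v set \<Rightarrow> int" where
  "delta sc NW X Y = (int (vector_space.dim sc X) - int (vector_space.dim sc Y))
      - (int (vector_space.dim esc (Nof sc NW X)) - int (vector_space.dim esc (Nof sc NW Y)))"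

definition strong :: "('a::field \<Rightarrow> 'v::ab_group_add \<Rightarrow> 'v) \<Rightarrow> ('a, 'v) ext2 set \<Rightarrow> 'v set \<Rightarrow> 'v set \<Rightarrow> bool" where
  "strong sc NW Y X \<longleftrightarrow> Y \<subseteq> X \<and>
     (\<forall>Z. module.subspace sc Z \<and> Y \<subseteq> Z \<and> Z \<subseteq> X \<longrightarrow> delta sc NW Z Y \<ge> 0)"

definition minimal_strong :: "('a::field \<Rightarrow> 'v::ab_group_add \<Rightarrow> 'v) \<Rightarrow> ('a, 'v) ext2 set \<Rightarrow> 'v set \<Rightarrow> 'v set \<Rightarrow> bool" where
  "minimal_strong sc NW Y X \<longleftrightarrow> strong sc NW Y X \<and> Y \<noteq> X \<and>
     \<not> (\<exists>Z. module.subspace sc Z \<and> Y \<subset> Z \<and> Z \<subset> X \<and> strong sc NW Z X)"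

definition fin_dim :: "('a::field \<Rightarrow> 'v::ab_group_add \<Rightarrow> 'v) \<Rightarrow> 'v set \<Rightarrow> bool" where
  "fin_dim sc X \<longleftrightarrow> (\<exists>S. finite S \<and> X = module.span sc S)"

end

theory Submission
  imports Defs
begin

context vector_space begin

lemma indep_span_disjoint:
  assumes ind: "independent (S \<union> T)" and d: "S \<inter> T = {}" and x: "x \<in> span S" "x \<in> span T"
  shows "x = 0"
proof -
  let ?R = "representation (S \<union> T) x"
  have rS: "?R = representation S x" by (rule representation_extend[OF ind x(1)]) auto
  have rT: "?R = representation T x" by (rule representation_extend[OF ind x(2)]) auto
  have z: "?R b = 0" for b
  proof (rule ccontr)
    assume "?R b \<noteq> 0"
    then have "b \<in> S" "b \<in> T" using representation_ne_zero rS rT by metis+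
    then show False using d by auto
  qed
  have "x \<in> span (S \<union> T)" using x(1) span_mono[of S "S \<union> T"] by auto
  from sum_nonzero_representation_eq[OF ind this] show ?thesis by (simp add: z)
qed

lemma dim_mono_fin:
  assumes "X \<subseteq> span Y" "Y \<subseteq> span T" "finite T"
  shows "dim X \<le> dim Y"
proof -
  obtain B where B: "B \<subseteq> Y" "independent B" "Y \<subseteq> span B" "card B = dim Y" using basis_exists by blast
  have "finite B" using independent_span_bound[OF assms(3) B(2)] B(1) assms(2) by auto
  have "X \<subseteq> span B" using assms(1) B(3) span_mono[OF B(3)] by (auto simp: span_span)
  from dim_le_card[OF this \<open>finite B\<close>] B(4) show ?thesis by simp
qed

lemma indep_if_card_le_dim:
  assumes "finite S" "card S \<le> dim S"
  shows "independent S"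
proof -
  obtain B where B: "B \<subseteq> S" "independent B" "S \<subseteq> span B" using maximal_independent_subset by blast
  have "card B = dim S" using basis_card_eq_dim[OF B(1) B(3) B(2)] .
  then have "B = S" using card_subset_eq[OF assms(1) B(1)] card_mono[OF assms(1) B(1)] assms(2) by simp
  then show ?thesis using B(2) by simp
qed

lemma dim_union_indep:
  assumes "independent (S \<union> T)" "S \<inter> T = {}" "finite S" "finite T"
  shows "dim (span (S \<union> T)) = card S + card T"
  using assms by (simp add: dim_eq_card_independent card_Un_disjoint)

lemma rank_nullity:
  assumes g: "Vector_Spaces.linear scale scale g" and X: "subspace X" and T: "finite T" "X \<subseteq> span T"
  shows "dim X = dim (g ` X) + dim {x \<in> X. g x = 0}"
proof -
  interpret lg: Vector_Spaces.linear scale scale g by (rule g)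
  let ?K = "{x \<in> X. g x = 0}"
  obtain bK where bK: "bK \<subseteq> ?K" "independent bK" "?K \<subseteq> span bK"
    using maximal_independent_subset by blast
  obtain bX where bX: "bK \<subseteq> bX" "bX \<subseteq> X" "independent bX" "X \<subseteq> span bX"
    using maximal_independent_subset_extend[of bK X] bK by blast
  have finX: "finite bX" using independent_span_bound[OF T(1) bX(3)] bX(2) T(2) by auto
  have dX: "dim X = card bX" using basis_card_eq_dim[OF bX(2) bX(4) bX(3)] by simp
  have dK: "dim ?K = card bK" using basis_card_eq_dim[OF bK(1) bK(3) bK(2)] by simp
  let ?P = "bX - bK"
  have spX: "span bX \<subseteq> X" using bX(2) X by (simp add: span_minimal)
  have inj: "inj_on g (span ?P)"
  proof (subst lg.inj_on_iff_eq_0[OF subspace_span], intro ballI impI)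
    fix x assume x: "x \<in> span ?P" "g x = 0"
    have "x \<in> X" using x(1) span_mono[of ?P bX] spX by auto
    then have "x \<in> span bK" using x(2) bK(3) by auto
    moreover have "?P \<union> bK = bX" "?P \<inter> bK = {}" using bX(1) by auto
    ultimately show "x = 0" using indep_span_disjoint[of ?P bK x] x(1) bX(3) by auto
  qed
  have indP: "independent (g ` ?P)"
    by (rule lg.independent_injective_image[OF _ inj]) (use bX(3) independent_mono in auto)
  have injP: "inj_on g ?P" using inj span_superset inj_on_subset by blast
  have sub1: "g ` ?P \<subseteq> g ` X" using bX(2) by auto
  have sub2: "g ` X \<subseteq> span (g ` ?P)"
  proof
    fix y assume "y \<in> g ` X"
    then obtain x where x: "x \<in> X" "y = g x" by auto
    have "g x \<in> span (g ` bX)" using x bX(4) lg.span_image by auto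
    moreover have "g ` bX \<subseteq> span (g ` ?P)"
    proof
      fix z assume "z \<in> g ` bX"
      then obtain b where b: "b \<in> bX" "z = g b" by auto
      show "z \<in> span (g ` ?P)"
      proof (cases "b \<in> bK")
        case True then have "g b = 0" using bK(1) by auto
        then show ?thesis using b span_zero by simp
      next
        case False then show ?thesis using b span_base by auto
      qed
    qed
    ultimately show "y \<in> span (g ` ?P)" using x span_mono[of "g ` bX" "span (g ` ?P)"] by (auto simp: span_span)
  qed
  have "dim (g ` X) = card (g ` ?P)" using basis_card_eq_dim[OF sub1 sub2 indP] by simp
  also have "\<dots> = card ?P" using card_image[OF injP] .
  also have "\<dots> = card bX - card bK" using card_Diff_subset[OF finite_subset[OF bX(1) finX] bX(1)] .
  finally show ?thesis using dX dK card_mono[OF finX bX(1)] by simp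
qed

end

lemma vs_field: "vector_space ((*) :: 'a::field \<Rightarrow> 'a \<Rightarrow> 'a)"
  by unfold_locales (auto simp: algebra_simps)

lemma vs_esc: "vector_space (esc :: 'a::field \<Rightarrow> ('a,'v) ext2 \<Rightarrow> _)"
  by unfold_locales (auto simp: esc_def fun_eq_iff algebra_simps)

locale ctx = vs: vector_space sc for sc :: "'a::field \<Rightarrow> 'v::ab_group_add \<Rightarrow> 'v"
begin

sublocale e: vector_space "esc :: 'a \<Rightarrow> ('a,'v) ext2 \<Rightarrow> _" by unfold_locales (auto simp: esc_def fun_eq_iff algebra_simps)
sublocale fl: vector_space "(*) :: 'a \<Rightarrow> 'a \<Rightarrow> 'a" by unfold_locales (auto simp: algebra_simps)
sublocale vf: vector_space_pair sc "(*) :: 'a \<Rightarrow> 'a \<Rightarrow> 'a" ..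
sublocale vv: vector_space_pair sc sc ..
sublocale ee: vector_space_pair "esc :: 'a \<Rightarrow> ('a,'v) ext2 \<Rightarrow> _" "esc :: 'a \<Rightarrow> ('a,'v) ext2 \<Rightarrow> _" ..

abbreviation lin :: "('v \<Rightarrow> 'a) \<Rightarrow> bool" where "lin \<equiv> Vector_Spaces.linear sc (*)"

lemma lin_add: "lin \<phi> \<Longrightarrow> \<phi> (x + y) = \<phi> x + \<phi> y" by (simp add: Vector_Spaces.linear_iff)
lemma lin_scale: "lin \<phi> \<Longrightarrow> \<phi> (sc c x) = c * \<phi> x" by (simp add: Vector_Spaces.linear_iff)
lemma lin_zero: "lin \<phi> \<Longrightarrow> \<phi> 0 = 0" using vf.linear_0 by blast

lemma wedge_app: "wedge sc x y (\<phi>, \<psi>) = (if lin \<phi> \<and> lin \<psi> then \<phi> x * \<psi> y - \<phi> y * \<psi> x else 0)"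
  by (simp add: wedge_def)

lemma esc_app: "esc c F p = c * F p" by (simp add: esc_def)

lemma wedge_add1: "wedge sc (x + x') y = wedge sc x y + wedge sc x' y"
  by (simp add: fun_eq_iff wedge_app lin_add ring_distribs)
lemma wedge_add2: "wedge sc x (y + y') = wedge sc x y + wedge sc x y'"
  by (simp add: fun_eq_iff wedge_app lin_add ring_distribs)
lemma wedge_scale1: "wedge sc (sc c x) y = esc c (wedge sc x y)"
  by (simp add: fun_eq_iff wedge_app esc_app lin_scale right_diff_distrib)
lemma wedge_scale2: "wedge sc x (sc c y) = esc c (wedge sc x y)"
  by (simp add: fun_eq_iff wedge_app esc_app lin_scale right_diff_distrib mult.left_commute)
lemma wedge_01: "wedge sc 0 y = 0"
  by (simp add: fun_eq_iff wedge_app lin_zero)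
lemma wedge_02: "wedge sc x 0 = 0"
  by (simp add: fun_eq_iff wedge_app lin_zero)
lemma wedge_swap: "wedge sc y x = - wedge sc x y"
  by (simp add: fun_eq_iff wedge_app mult.commute)
lemma lin_diff: "lin \<phi>1 \<Longrightarrow> lin \<phi>2 \<Longrightarrow> lin (\<lambda>v. \<phi>1 v - \<phi>2 v)"
  by (rule vf.linear_compose_sub)
lemma lin_comp: "lin \<phi> \<Longrightarrow> Vector_Spaces.linear sc sc p \<Longrightarrow> lin (\<phi> \<circ> p)"
  by (rule Vector_Spaces.linear_compose)
lemma lin_0: "lin (\<lambda>v. 0)"
  by (rule vf.linear_zero)

definition W2 :: "'v set \<Rightarrow> ('a,'v) ext2 set" where
  "W2 X = {wedge sc x y | x y. x \<in> X \<and> y \<in> X}"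

lemma Lam2_eq: "Lam2 sc X = e.span (W2 X)" by (simp add: Lam2_def W2_def)

lemma Lam2_subspace: "e.subspace (Lam2 sc X)" by (simp add: Lam2_eq)

lemma wedge_Lam2: "x \<in> X \<Longrightarrow> y \<in> X \<Longrightarrow> wedge sc x y \<in> Lam2 sc X"
  unfolding Lam2_eq W2_def by (rule e.span_base) auto

lemma Lam2_mono: "X \<subseteq> Y \<Longrightarrow> Lam2 sc X \<subseteq> Lam2 sc Y"
  unfolding Lam2_eq W2_def by (rule e.span_mono) auto

lemma Lam2_induct:
  assumes "F \<in> Lam2 sc X" "e.subspace {F. P F}" "\<And>x y. x \<in> X \<Longrightarrow> y \<in> X \<Longrightarrow> P (wedge sc x y)"
  shows "P F"
  using assms(1) unfolding Lam2_eq by (rule e.span_induct) (use assms in \<open>auto simp: W2_def\<close>)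

lemma subspace_evalI:
  assumes "\<And>F G. P F \<Longrightarrow> P G \<Longrightarrow> P (F + G)" "\<And>c F. P F \<Longrightarrow> P (esc c F)" "P 0"
  shows "e.subspace {F. P F}"
  using assms by (auto simp: e.subspace_def)

lemma N0: "F \<in> Lam2 sc X \<Longrightarrow> \<not> (lin \<phi> \<and> lin \<psi>) \<Longrightarrow> F (\<phi>, \<psi>) = 0"
  by (erule Lam2_induct) (auto intro!: subspace_evalI simp: esc_app wedge_app)

lemma AS: "F \<in> Lam2 sc X \<Longrightarrow> F (\<psi>, \<phi>) = - F (\<phi>, \<psi>)"
  by (erule Lam2_induct) (auto intro!: subspace_evalI simp: esc_app wedge_app mult.commute)

lemma BL: "F \<in> Lam2 sc X \<Longrightarrow> lin \<phi>1 \<Longrightarrow> lin \<phi>2 \<Longrightarrow>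
    F (\<lambda>v. \<phi>1 v - \<phi>2 v, \<psi>) = F (\<phi>1, \<psi>) - F (\<phi>2, \<psi>)"
  apply (erule Lam2_induct)
   apply (rule subspace_evalI)
     apply (simp add: algebra_simps)
    apply (simp add: esc_app right_diff_distrib)
   apply simp
  apply (auto simp: wedge_app lin_diff algebra_simps)
  done

lemma LOC: "F \<in> Lam2 sc X \<Longrightarrow> lin \<phi>1 \<Longrightarrow> lin \<phi>2 \<Longrightarrow> lin \<psi>1 \<Longrightarrow> lin \<psi>2 \<Longrightarrow>
    (\<forall>x\<in>X. \<phi>1 x = \<phi>2 x) \<Longrightarrow> (\<forall>x\<in>X. \<psi>1 x = \<psi>2 x) \<Longrightarrow> F (\<phi>1, \<psi>1) = F (\<phi>2, \<psi>2)"
  by (erule Lam2_induct) (auto intro!: subspace_evalI simp: esc_app wedge_app)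

lemma VAN: "F \<in> Lam2 sc X \<Longrightarrow> lin \<phi> \<Longrightarrow> (\<forall>x\<in>X. \<phi> x = 0) \<Longrightarrow> F (\<phi>, \<psi>) = 0"
proof (cases "lin \<psi>")
  case True
  assume F: "F \<in> Lam2 sc X" and l: "lin \<phi>" and z: "\<forall>x\<in>X. \<phi> x = 0"
  have "F (\<phi>, \<psi>) = F (\<lambda>v. 0, \<psi>)" using LOC[OF F l lin_0 True True] z by auto
  also have "\<dots> = 0" using F by (rule Lam2_induct) (auto intro!: subspace_evalI simp: esc_app wedge_app)
  finally show ?thesis .
qed (auto simp: N0)

definition push :: "('v \<Rightarrow> 'v) \<Rightarrow> ('a,'v) ext2 \<Rightarrow> ('a,'v) ext2" where
  "push p F = (\<lambda>(\<phi>,\<psi>). if lin \<phi> \<and> lin \<psi> then F (\<phi> \<circ> p, \<psi> \<circ> p) else 0)"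
definition der :: "('v \<Rightarrow> 'v) \<Rightarrow> ('a,'v) ext2 \<Rightarrow> ('a,'v) ext2" where
  "der g F = (\<lambda>(\<phi>,\<psi>). if lin \<phi> \<and> lin \<psi> then F (\<phi> \<circ> g, \<psi>) + F (\<phi>, \<psi> \<circ> g) else 0)"

lemma linear_push: "Vector_Spaces.linear esc esc (push p)"
  unfolding Vector_Spaces.linear_iff
  by (auto simp: vs_esc push_def fun_eq_iff esc_app)

lemma linear_der: "Vector_Spaces.linear esc esc (der g)"
  unfolding Vector_Spaces.linear_iff
  by (auto simp: vs_esc der_def fun_eq_iff esc_app algebra_simps)

lemma push_wedge: "Vector_Spaces.linear sc sc p \<Longrightarrow> push p (wedge sc x y) = wedge sc (p x) (p y)"
  by (auto simp: fun_eq_iff push_def wedge_app lin_comp)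

lemma der_wedge: "Vector_Spaces.linear sc sc g \<Longrightarrow>
    der g (wedge sc x y) = wedge sc (g x) y + wedge sc x (g y)"
  by (auto simp: fun_eq_iff der_def wedge_app lin_comp algebra_simps)
lemma Lam2_map:
  assumes L: "Vector_Spaces.linear esc esc L" and F: "F \<in> Lam2 sc X" and T: "e.subspace T"
    and w: "\<And>x y. x \<in> X \<Longrightarrow> y \<in> X \<Longrightarrow> L (wedge sc x y) \<in> T"
  shows "L F \<in> T"
  using F
proof (rule Lam2_induct)
  show "e.subspace {F. L F \<in> T}" using ee.linear_subspace_linear_preimage[OF L T] .
qed (use w in auto)

lemma proj_exists:
  assumes X: "vs.subspace X"
  obtains p where "Vector_Spaces.linear sc sc p" "\<And>v. p v \<in> X" "\<And>x. x \<in> X \<Longrightarrow> p x = x"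
proof -
  obtain bX where b: "bX \<subseteq> X" "vs.independent bX" "X \<subseteq> vs.span bX"
    using vs.maximal_independent_subset by blast
  have sp: "vs.span bX = X" using b X by (simp add: vs.span_subspace)
  let ?p = "vv.construct bX id"
  have l: "Vector_Spaces.linear sc sc ?p" by (rule vv.linear_construct[OF b(2)])
  have "?p v \<in> X" for v using vv.construct_in_span[OF b(2), of id v] sp by simp
  moreover have "?p x = x" if "x \<in> X" for x
    using vv.linear_eq_on[OF l vs.linear_ident, of x bX] that sp vv.construct_basis[OF b(2)] by auto
  ultimately show ?thesis using l that by blast
qed

lemma push_fix:
  assumes p: "Vector_Spaces.linear sc sc p" "\<And>x. x \<in> X \<Longrightarrow> p x = x" and F: "F \<in> Lam2 sc X"
  shows "push p F = F"
  using F
proof (rule Lam2_induct)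
  show "e.subspace {F. push p F = F}"
    using ee.linear_add[OF linear_push] ee.linear_scale[OF linear_push] ee.linear_0[OF linear_push]
    by (intro subspace_evalI) auto
qed (simp add: push_wedge p)

lemma push_in:
  assumes p: "Vector_Spaces.linear sc sc p" "\<And>v. p v \<in> X" and F: "F \<in> Lam2 sc Y"
  shows "push p F \<in> Lam2 sc X"
  by (rule Lam2_map[OF linear_push F Lam2_subspace]) (simp add: push_wedge p wedge_Lam2)

lemma CHAR:
  assumes F: "F \<in> Lam2 sc Y" and X: "vs.subspace X"
    and van: "\<And>\<phi> \<psi>. lin \<phi> \<Longrightarrow> lin \<psi> \<Longrightarrow> (\<forall>x\<in>X. \<phi> x = 0) \<Longrightarrow> F (\<phi>, \<psi>) = 0"
  shows "F \<in> Lam2 sc X"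
proof -
  obtain p where p: "Vector_Spaces.linear sc sc p" "\<And>v. p v \<in> X" "\<And>x. x \<in> X \<Longrightarrow> p x = x"
    using proj_exists[OF X] by blast
  have "F = push p F"
  proof (rule ext, clarify)
    fix \<phi> \<psi> :: "'v \<Rightarrow> 'a"
    show "F (\<phi>, \<psi>) = push p F (\<phi>, \<psi>)"
    proof (cases "lin \<phi> \<and> lin \<psi>")
      case True
      then have l: "lin \<phi>" "lin \<psi>" "lin (\<phi> \<circ> p)" "lin (\<psi> \<circ> p)" using lin_comp p(1) by auto
      have v1: "F (\<lambda>v. \<phi> v - (\<phi> \<circ> p) v, \<psi>) = 0"
        by (rule van) (use l p lin_diff[OF l(1) l(3)] in \<open>auto simp: o_def\<close>)
      have v2: "F (\<lambda>v. \<psi> v - (\<psi> \<circ> p) v, \<phi> \<circ> p) = 0"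
        by (rule van) (use l p lin_diff[OF l(2) l(4)] in \<open>auto simp: o_def\<close>)
      have e1: "F (\<phi>, \<psi>) - F (\<phi> \<circ> p, \<psi>) = 0" using BL[OF F l(1) l(3), of \<psi>] v1 by simp
      have e2: "F (\<psi>, \<phi> \<circ> p) - F (\<psi> \<circ> p, \<phi> \<circ> p) = 0" using BL[OF F l(2) l(4), of "\<phi> \<circ> p"] v2 by simp
      have "F (\<phi> \<circ> p, \<psi>) = F (\<phi> \<circ> p, \<psi> \<circ> p)"
        using e2 AS[OF F, of "\<phi> \<circ> p" \<psi>] AS[OF F, of "\<phi> \<circ> p" "\<psi> \<circ> p"] by simp
      then show ?thesis using e1 True by (simp add: push_def)
    qed (auto simp: push_def N0[OF F])
  qed
  then show ?thesis using push_in[OF p(1,2) F] by simp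
qed

lemma VAN': "F \<in> Lam2 sc X \<Longrightarrow> lin \<phi> \<Longrightarrow> lin \<psi> \<Longrightarrow> (\<forall>x\<in>X. \<phi> x = 0) \<Longrightarrow> F (\<phi>, \<psi>) = 0"
  using VAN by blast
lemma wedge_span:
  assumes x: "x \<in> vs.span T" and y: "y \<in> vs.span T"
  shows "wedge sc x y \<in> e.span (W2 T)"
proof -
  let ?S = "e.span (W2 T)"
  have 1: "wedge sc a y \<in> ?S" if a: "a \<in> T" and y: "y \<in> vs.span T" for a y
  proof (rule vs.span_induct[OF y, of "\<lambda>y. wedge sc a y \<in> ?S"])
    show "vs.subspace {y. wedge sc a y \<in> ?S}"
      by (rule vs.subspaceI) (auto simp: wedge_02 wedge_add2 wedge_scale2 e.span_zero e.span_add e.span_scale)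
  next
    fix y assume "y \<in> T" then show "wedge sc a y \<in> ?S" using a by (intro e.span_base) (auto simp: W2_def)
  qed
  have "\<forall>y\<in>vs.span T. wedge sc x y \<in> ?S"
  proof (rule vs.span_induct[OF x, of "\<lambda>x. \<forall>y\<in>vs.span T. wedge sc x y \<in> ?S"])
    show "vs.subspace {x. \<forall>y\<in>vs.span T. wedge sc x y \<in> ?S}"
      by (rule vs.subspaceI) (auto simp: wedge_01 wedge_add1 wedge_scale1 e.span_zero e.span_add e.span_scale)
  qed (use 1 in auto)
  then show ?thesis using y by auto
qed

lemma Lam2_fin: "X \<subseteq> vs.span T \<Longrightarrow> Lam2 sc X \<subseteq> e.span (W2 T)"
proof
  fix F assume X: "X \<subseteq> vs.span T" and F: "F \<in> Lam2 sc X"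
  show "F \<in> e.span (W2 T)"
    by (rule Lam2_induct[OF F, of "\<lambda>F. F \<in> e.span (W2 T)"]) (use X in \<open>auto intro!: wedge_span\<close>)
qed

lemma W2_finite: "finite T \<Longrightarrow> finite (W2 T)"
proof -
  assume "finite T"
  have "W2 T = (\<lambda>(x,y). wedge sc x y) ` (T \<times> T)" by (auto simp: W2_def)
  then show ?thesis using \<open>finite T\<close> by simp
qed



lemma GEN:
  assumes bY: "finite bY" and bC: "finite bC" and h: "Vector_Spaces.linear sc sc h"
    and dimM: "vs.dim (bY \<union> h ` bC) = card bY + card bC"
    and T: "T \<subseteq> vs.span bC" "vs.independent T"
  shows "vs.independent (bY \<union> h ` T) \<and> bY \<inter> h ` T = {} \<and> inj_on h T"
proof -
  obtain T' where T': "T \<subseteq> T'" "T' \<subseteq> vs.span bC" "vs.independent T'" "vs.span bC \<subseteq> vs.span T'"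
    using vs.maximal_independent_subset_extend[OF T(1) T(2)] by blast
  have fT': "finite T'" and cT': "card T' \<le> card bC"
    using vs.independent_span_bound[OF bC T'(3) T'(2)] by auto
  let ?S = "bY \<union> h ` T'"
  have fS: "finite ?S" using bY fT' by simp
  have "h ` bC \<subseteq> h ` vs.span T'" using T'(4) vs.span_superset by blast
  also have "\<dots> = vs.span (h ` T')" using vv.linear_span_image[OF h] by simp
  also have "\<dots> \<subseteq> vs.span ?S" by (rule vs.span_mono) auto
  finally have "bY \<union> h ` bC \<subseteq> vs.span ?S" by (auto intro: vs.span_base)
  then have d1: "vs.dim (bY \<union> h ` bC) \<le> vs.dim ?S"
    by (rule vs.dim_mono_fin[OF _ vs.span_superset fS])
  have c1: "card ?S \<le> card bY + card (h ` T')" using card_Un_le .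
  have c2: "card (h ` T') \<le> card T'" using card_image_le fT' .
  have dS: "vs.dim ?S \<le> card ?S" using vs.dim_le_card' fS .
  have eqs: "card ?S = card bY + card (h ` T')" "card (h ` T') = card T'" "card ?S \<le> vs.dim ?S"
    using c1 c2 dS d1 dimM cT' by linarith+
  have ind: "vs.independent ?S" using vs.indep_if_card_le_dim[OF fS eqs(3)] .
  have "card (bY \<inter> h ` T') = 0" using card_Un_Int[of bY "h ` T'"] bY fT' eqs(1) by simp
  then have disj: "bY \<inter> h ` T' = {}" using bY by simp
  have inj: "inj_on h T'" using inj_on_iff_eq_card[OF fT'] eqs(2) by blast
  show ?thesis
  proof (intro conjI)
    show "vs.independent (bY \<union> h ` T)" by (rule vs.independent_mono[OF ind]) (use T'(1) in auto)
    show "bY \<inter> h ` T = {}" using disj T'(1) by auto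
    show "inj_on h T" using inj_on_subset[OF inj T'(1)] .
  qed
qed

lemma tilde_eq:
  assumes g: "Vector_Spaces.linear sc sc g" and eq: "\<forall>x\<in>X. f x = g x" and F: "F \<in> Lam2 sc X"
  shows "tilde sc f X F = der g F"
proof -
  let ?P = "\<lambda>L. Vector_Spaces.linear esc esc L \<and>
     (\<forall>x\<in>X. \<forall>y\<in>X. L (wedge sc x y) = wedge sc (f x) y + wedge sc x (f y))"
  have "?P (der g)" using linear_der der_wedge[OF g] eq by auto
  then have P: "?P (tilde sc f X)" unfolding tilde_def using someI[of ?P "der g"] by blast
  then have l: "Vector_Spaces.linear esc esc (tilde sc f X)" by blast
  show ?thesis
  proof (rule Lam2_induct[OF F, of "\<lambda>F. tilde sc f X F = der g F"])
    show "e.subspace {F. tilde sc f X F = der g F}"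
      using ee.linear_add[OF l] ee.linear_scale[OF l] ee.linear_0[OF l]
        ee.linear_add[OF linear_der] ee.linear_scale[OF linear_der] ee.linear_0[OF linear_der]
      by (intro subspace_evalI) auto
  next
    fix x y assume "x \<in> X" "y \<in> X"
    then show "tilde sc f X (wedge sc x y) = der g (wedge sc x y)"
      using P der_wedge[OF g] eq by auto
  qed
qed


end

lemma ssumI: "x \<in> X \<Longrightarrow> y \<in> Y \<Longrightarrow> x + y \<in> ssum X Y" by (auto simp: ssum_def)
lemma ssumE: "z \<in> ssum X Y \<Longrightarrow> (\<And>x y. x \<in> X \<Longrightarrow> y \<in> Y \<Longrightarrow> z = x + y \<Longrightarrow> P) \<Longrightarrow> P"
  by (auto simp: ssum_def)

locale stp = ctx sc for sc :: "'a::field \<Rightarrow> 'v::ab_group_add \<Rightarrow> 'v" +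
  fixes A B :: "'v set" and bB bC bW :: "'v set" and g :: "'v \<Rightarrow> 'v" and NV :: "('a,'v) ext2 set"
  assumes Asub: "vs.subspace A" and Bsub: "vs.subspace B"
    and fbB: "finite bB" and fbC: "finite bC"
    and indBC: "vs.independent (bB \<union> bC)" and disjBC: "bB \<inter> bC = {}"
    and spB: "vs.span bB = B" and spA: "vs.span (bB \<union> bC) = A"
    and glin: "Vector_Spaces.linear sc sc g"
    and NVsub: "e.subspace NV"
    and fder: "\<And>n. n \<in> NV \<Longrightarrow> n \<in> Lam2 sc B \<Longrightarrow> der g n \<in> NV"
    and fbW: "finite bW" and indW: "vs.independent bW" and spW: "vs.span bW = ssum A (g ` B)"
    and free: "int (vs.dim (ssum A (g ` A))) - int (vs.dim (ssum A (g ` B))) = int (card bC)"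
begin

definition "CC = vs.span bC"
definition "WW = ssum A (g ` B)"
definition "UU = ssum A (g ` A)"
definition "NU = ssum (NV \<inter> Lam2 sc WW) (der g ` (NV \<inter> Lam2 sc A))"

lemma span_ssum: "vs.span (S \<union> T) = ssum (vs.span S) (vs.span T)"
  by (simp add: vs.span_Un ssum_def)

lemma g_span: "g ` vs.span S = vs.span (g ` S)"
  using vv.linear_span_image[OF glin] by simp

lemma g0: "g 0 = 0" using vv.linear_0[OF glin] .
lemma gadd: "g (x + y) = g x + g y" using vv.linear_add[OF glin] .

lemma A_eq: "A = ssum B CC" using span_ssum[of bB bC] spA spB by (simp add: CC_def)
lemma BA: "B \<subseteq> A" using spB spA vs.span_mono[of bB "bB \<union> bC"] by auto
lemma CA: "CC \<subseteq> A" using spA vs.span_mono[of bC "bB \<union> bC"] by (auto simp: CC_def)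
lemma CCsub: "vs.subspace CC" by (simp add: CC_def)
lemma BC0: "x \<in> B \<Longrightarrow> x \<in> CC \<Longrightarrow> x = 0"
  using vs.indep_span_disjoint[OF indBC disjBC] spB by (auto simp: CC_def)

lemma WW_eq: "WW = vs.span (bB \<union> bC \<union> g ` bB)"
  using span_ssum[of "bB \<union> bC" "g ` bB"] by (simp add: WW_def spA g_span[symmetric] spB)
lemma UU_eq: "UU = vs.span (bB \<union> bC \<union> g ` (bB \<union> bC))"
  using span_ssum[of "bB \<union> bC" "g ` (bB \<union> bC)"] by (simp add: UU_def spA g_span[symmetric])
lemma WWsub: "vs.subspace WW" by (simp add: WW_eq)
lemma UUsub: "vs.subspace UU" by (simp add: UU_eq)
lemma spW': "vs.span bW = WW" using spW by (simp add: WW_def)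
lemma AW: "A \<subseteq> WW"
proof
  fix a assume "a \<in> A" then have "a + g 0 \<in> WW" unfolding WW_def
    using Bsub by (intro ssumI) (auto simp: vs.subspace_0)
  then show "a \<in> WW" by (simp add: g0)
qed
lemma gBW: "b \<in> B \<Longrightarrow> g b \<in> WW"
  using ssumI[of 0 A "g b" "g ` B"] Asub by (simp add: WW_def vs.subspace_0)
lemma WU: "WW \<subseteq> UU" unfolding WW_def UU_def ssum_def using BA by blast
lemma gAU: "a \<in> A \<Longrightarrow> g a \<in> UU"
  using ssumI[of 0 A "g a" "g ` A"] Asub by (simp add: UU_def vs.subspace_0)

lemma UU_span: "UU = vs.span (bW \<union> g ` bC)"
proof -
  have "vs.span (bW \<union> g ` bC) = vs.span (bB \<union> bC \<union> g ` (bB \<union> bC))"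
  proof (subst vs.span_eq, intro conjI)
    have "bW \<subseteq> UU" using WU spW' vs.span_superset by blast
    moreover have "g ` bC \<subseteq> UU" using gAU CA vs.span_superset by (auto simp: CC_def)
    ultimately show "bW \<union> g ` bC \<subseteq> vs.span (bB \<union> bC \<union> g ` (bB \<union> bC))" using UU_eq by auto
    have "bB \<union> bC \<subseteq> vs.span bW" using AW spA spW' vs.span_superset by blast
    moreover have "g ` bB \<subseteq> vs.span bW" using gBW spB spW' vs.span_superset by blast
    moreover have "g ` bC \<subseteq> vs.span (bW \<union> g ` bC)" by (auto intro: vs.span_base)
    moreover have "vs.span bW \<subseteq> vs.span (bW \<union> g ` bC)" by (rule vs.span_mono) auto
    ultimately show "bB \<union> bC \<union> g ` (bB \<union> bC) \<subseteq> vs.span (bW \<union> g ` bC)" by blast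
  qed
  then show ?thesis using UU_eq by simp
qed

lemma dimW: "vs.dim WW = card bW"
  using vs.dim_eq_card_independent[OF indW] spW' vs.dim_span[of bW] by simp

lemma dimU: "vs.dim (bW \<union> g ` bC) = card bW + card bC"
proof -
  have "vs.dim (bW \<union> g ` bC) = vs.dim UU" using UU_span vs.dim_span by metis
  then show ?thesis using free dimW by (simp add: UU_def WW_def)
qed

lemma GENW: "T \<subseteq> CC \<Longrightarrow> vs.independent T \<Longrightarrow>
    vs.independent (bW \<union> g ` T) \<and> bW \<inter> g ` T = {} \<and> inj_on g T"
  by (rule GEN[OF fbW fbC glin dimU]) (auto simp: CC_def)

lemma GENB: "T \<subseteq> CC \<Longrightarrow> vs.independent T \<Longrightarrow>
    vs.independent (bB \<union> T) \<and> bB \<inter> T = {}"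
proof -
  assume T: "T \<subseteq> CC" "vs.independent T"
  have d: "vs.dim (bB \<union> (\<lambda>x. x) ` bC) = card bB + card bC"
    using vs.dim_eq_card_independent[OF indBC] disjBC fbB fbC by (simp add: card_Un_disjoint)
  show ?thesis using GEN[OF fbB fbC vs.linear_ident d, of T] T by (simp add: CC_def)
qed


lemma ssum_sub: "vs.subspace X \<Longrightarrow> vs.subspace Y \<Longrightarrow> vs.subspace (ssum X Y)"
  using vs.subspace_sums by (simp add: ssum_def)

lemma gD_sub: "vs.subspace D \<Longrightarrow> vs.subspace (g ` D)"
  using vv.linear_subspace_image[OF glin] .

lemma BD_sub: "vs.subspace D \<Longrightarrow> vs.subspace (ssum B D)" using ssum_sub Bsub by blast
lemma ZD_sub: "vs.subspace D \<Longrightarrow> vs.subspace (ssum WW (g ` D))" using ssum_sub WWsub gD_sub by blast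

lemma BD_A: "D \<subseteq> CC \<Longrightarrow> ssum B D \<subseteq> A"
  using A_eq by (auto simp: ssum_def)

lemma BD_in_ZD:
  assumes D: "vs.subspace D" "D \<subseteq> CC" and x: "x \<in> ssum B D"
  shows "x \<in> ssum WW (g ` D)" "g x \<in> ssum WW (g ` D)"
proof -
  have "x \<in> WW" using x BD_A[OF D(2)] AW by blast
  then have "x + g 0 \<in> ssum WW (g ` D)" using D(1) by (intro ssumI) (auto simp: vs.subspace_0)
  then show "x \<in> ssum WW (g ` D)" by (simp add: g0)
  from x obtain b d where bd: "b \<in> B" "d \<in> D" "x = b + d" by (auto elim: ssumE)
  then have "g b + g d \<in> ssum WW (g ` D)" using gBW by (intro ssumI) auto
  then show "g x \<in> ssum WW (g ` D)" using bd gadd by simp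
qed

lemma KL':
  assumes D: "vs.subspace D" "D \<subseteq> CC" and n: "n \<in> Lam2 sc (ssum B D)"
  shows "der g n \<in> Lam2 sc (ssum WW (g ` D))"
proof (rule Lam2_map[OF linear_der n Lam2_subspace])
  fix x y assume xy: "x \<in> ssum B D" "y \<in> ssum B D"
  show "der g (wedge sc x y) \<in> Lam2 sc (ssum WW (g ` D))"
    unfolding der_wedge[OF glin]
    by (rule e.subspace_add[OF Lam2_subspace]; rule wedge_Lam2) (use BD_in_ZD[OF D] xy in auto)
qed

lemma KL:
  assumes D: "vs.subspace D" "D \<subseteq> CC" and n: "n \<in> Lam2 sc A"
    and dn: "der g n \<in> Lam2 sc (ssum WW (g ` D))"
  shows "n \<in> Lam2 sc (ssum B D)"
proof (rule CHAR[OF n BD_sub[OF D(1)]])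
  fix \<phi> \<psi> assume l: "lin \<phi>" "lin \<psi>" and z: "\<forall>x\<in>ssum B D. \<phi> x = 0"
  have G: "vs.independent (bW \<union> g ` bC)" "bW \<inter> g ` bC = {}" "inj_on g bC"
    using GENW[of bC] indBC vs.independent_mono[of "bB \<union> bC" bC] by (auto simp: CC_def intro: vs.span_base)
  define S where "S = bW \<union> g ` bC"
  define \<phi>' where "\<phi>' = vf.construct S (\<lambda>s. if s \<in> bW then 0 else \<phi> (the_inv_into bC g s))"
  define \<psi>' where "\<psi>' = vf.construct S (\<lambda>s. if s \<in> bW then \<psi> s else 0)"
  have indS: "vs.independent S" using G by (simp add: S_def)
  have cb: "\<And>F b. b \<in> S \<Longrightarrow> vf.construct S F b = F b" using vf.construct_basis[OF indS] by blast
  have bWS: "\<And>b. b \<in> bW \<Longrightarrow> b \<in> S" by (simp add: S_def)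
  have l': "lin \<phi>'" "lin \<psi>'" unfolding \<phi>'_def \<psi>'_def using vf.linear_construct[OF indS] by auto
  have \<phi>'W: "\<phi>' w = 0" if "w \<in> WW" for w
  proof -
    have "\<phi>' w = (\<lambda>v. 0) w"
      by (rule vf.linear_eq_on[OF l'(1) lin_0, of w bW])
         (use that spW' in \<open>auto simp: \<phi>'_def cb bWS\<close>)
    then show ?thesis by simp
  qed
  have \<psi>'W: "\<psi>' w = \<psi> w" if "w \<in> WW" for w
    by (rule vf.linear_eq_on[OF l'(2) l(2), of w bW])
       (use that spW' in \<open>auto simp: \<psi>'_def cb bWS\<close>)
  have \<phi>'gC: "\<phi>' (g c) = \<phi> c" if "c \<in> CC" for c
  proof -
    have "(\<phi>' \<circ> g) c = \<phi> c"
    proof (rule vf.linear_eq_on[OF lin_comp[OF l'(1) glin] l(1), of c bC])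
      show "c \<in> vs.span bC" using that by (simp add: CC_def)
      fix b assume b: "b \<in> bC"
      then have "g b \<in> S" "g b \<notin> bW" using G(2) by (auto simp: S_def)
      then show "(\<phi>' \<circ> g) b = \<phi> b"
        using b G(3) by (simp add: \<phi>'_def cb the_inv_into_f_f)
    qed
    then show ?thesis by simp
  qed
  have van: "\<forall>x\<in>ssum WW (g ` D). \<phi>' x = 0"
  proof
    fix x assume "x \<in> ssum WW (g ` D)"
    then obtain w d where wd: "w \<in> WW" "d \<in> D" "x = w + g d" by (auto elim: ssumE)
    have "d \<in> ssum B D" using ssumI[of 0 B d D] Bsub wd(2) by (simp add: vs.subspace_0)
    then have "\<phi> d = 0" using z by auto
    then show "\<phi>' x = 0" using wd \<phi>'W \<phi>'gC[of d] D(2) lin_add[OF l'(1)] by auto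
  qed
  have 0: "der g n (\<phi>', \<psi>') = 0" by (rule VAN'[OF dn l' van])
  have 1: "der g n (\<phi>', \<psi>') = n (\<phi>' \<circ> g, \<psi>') + n (\<phi>', \<psi>' \<circ> g)" by (simp add: der_def l')
  have 2: "n (\<phi>', \<psi>' \<circ> g) = 0"
    by (rule VAN'[OF n l'(1) lin_comp[OF l'(2) glin]]) (use \<phi>'W AW in auto)
  have 3: "n (\<phi>' \<circ> g, \<psi>') = n (\<phi>, \<psi>)"
  proof (rule LOC[OF n lin_comp[OF l'(1) glin] l(1) l'(2) l(2)])
    show "\<forall>x\<in>A. (\<phi>' \<circ> g) x = \<phi> x"
    proof
      fix a assume "a \<in> A"
      then obtain b c where bc: "b \<in> B" "c \<in> CC" "a = b + c" using A_eq by (auto elim: ssumE)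
      have "b \<in> ssum B D" using ssumI[of b B 0 D] D(1) bc(1) by (simp add: vs.subspace_0)
      then have "\<phi> b = 0" using z by auto
      then show "(\<phi>' \<circ> g) a = \<phi> a"
        using bc gadd lin_add[OF l'(1)] lin_add[OF l(1)] \<phi>'W[OF gBW[OF bc(1)]] \<phi>'gC[OF bc(2)] by simp
    qed
    show "\<forall>x\<in>A. \<psi>' x = \<psi> x" using \<psi>'W AW by auto
  qed
  show "n (\<phi>, \<psi>) = 0" using 0 1 2 3 by simp
qed


lemma ssum0: "vs.subspace X \<Longrightarrow> ssum X {0} = X" by (auto simp: ssum_def)
lemma g0set: "g ` {0} = {0}" by (simp add: g0)

lemma KL0: "n \<in> Lam2 sc A \<Longrightarrow> der g n \<in> Lam2 sc WW \<Longrightarrow> n \<in> Lam2 sc B"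
  using KL[of "{0}" n] by (simp add: g0 ssum0 WWsub Bsub CC_def vs.span_zero)
lemma KL0': "n \<in> Lam2 sc B \<Longrightarrow> der g n \<in> Lam2 sc WW"
  using KL'[of "{0}" n] by (simp add: g0 ssum0 WWsub Bsub CC_def vs.span_zero)

lemma Nsub: "e.subspace (NV \<inter> Lam2 sc X)" using e.subspace_inter[OF NVsub Lam2_subspace] .

lemma NUsub: "e.subspace NU"
proof -
  have "e.subspace (der g ` (NV \<inter> Lam2 sc A))" using ee.linear_subspace_image[OF linear_der Nsub] .
  then show ?thesis using e.subspace_sums[OF Nsub] by (simp add: NU_def ssum_def)
qed

lemma derl: "Vector_Spaces.linear esc esc (der g)" by (rule linear_der)
lemma der0: "der g 0 = 0" using ee.linear_0[OF derl] .

lemma NU_W: "NU \<inter> Lam2 sc WW = NV \<inter> Lam2 sc WW"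
proof
  show "NV \<inter> Lam2 sc WW \<subseteq> NU \<inter> Lam2 sc WW"
  proof
    fix w assume w: "w \<in> NV \<inter> Lam2 sc WW"
    have "0 \<in> NV \<inter> Lam2 sc A" using e.subspace_0[OF Nsub] .
    then have "w + der g 0 \<in> NU" unfolding NU_def using w by (intro ssumI) auto
    then show "w \<in> NU \<inter> Lam2 sc WW" using w der0 by simp
  qed
  show "NU \<inter> Lam2 sc WW \<subseteq> NV \<inter> Lam2 sc WW"
  proof
    fix m assume m: "m \<in> NU \<inter> Lam2 sc WW"
    then obtain w n where wn: "w \<in> NV \<inter> Lam2 sc WW" "n \<in> NV \<inter> Lam2 sc A" "m = w + der g n"
      by (auto simp: NU_def elim!: ssumE)
    have "m - w \<in> Lam2 sc WW" using e.subspace_diff[OF Lam2_subspace] m wn by blast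
    then have "der g n \<in> Lam2 sc WW" using wn(3) by simp
    then have "n \<in> Lam2 sc B" using KL0 wn by auto
    then have "der g n \<in> NV" using fder wn by auto
    then have "m \<in> NV" using wn e.subspace_add[OF NVsub] by auto
    then show "m \<in> NV \<inter> Lam2 sc WW" using m by auto
  qed
qed

lemma ZD_U: "D \<subseteq> CC \<Longrightarrow> ssum WW (g ` D) \<subseteq> UU"
proof
  fix x assume D: "D \<subseteq> CC" and "x \<in> ssum WW (g ` D)"
  then obtain w d where "w \<in> WW" "d \<in> D" "x = w + g d" by (auto elim: ssumE)
  then show "x \<in> UU" using WU gAU CA D vs.subspace_add[OF UUsub] by blast
qed

lemma DIMN:
  assumes D: "vs.subspace D" "D \<subseteq> CC"
  shows "e.dim (NU \<inter> Lam2 sc (ssum WW (g ` D))) + e.dim (NV \<inter> Lam2 sc B)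
       = e.dim (NV \<inter> Lam2 sc (ssum B D)) + e.dim (NV \<inter> Lam2 sc WW)"
proof -
  obtain p where p: "Vector_Spaces.linear sc sc p" "\<And>v. p v \<in> WW" "\<And>x. x \<in> WW \<Longrightarrow> p x = x"
    using proj_exists[OF WWsub] by blast
  define r where "r = (\<lambda>F. F - push p F)"
  have rl: "Vector_Spaces.linear esc esc r"
    unfolding r_def by (rule ee.linear_compose_sub[OF e.linear_ident linear_push])
  have r0: "r F = 0 \<longleftrightarrow> F \<in> Lam2 sc WW" if "F \<in> Lam2 sc Y" for F Y
  proof
    assume "r F = 0" then have "F = push p F" by (simp add: r_def)
    then show "F \<in> Lam2 sc WW" using push_in[OF p(1,2) that] by simp
  next
    assume "F \<in> Lam2 sc WW" then show "r F = 0" using push_fix[OF p(1) p(3)] by (simp add: r_def)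
  qed
  let ?Z = "ssum WW (g ` D)"
  let ?M = "NU \<inter> Lam2 sc ?Z"
  let ?X = "NV \<inter> Lam2 sc (ssum B D)"
  have Msub: "e.subspace ?M" using e.subspace_inter[OF NUsub Lam2_subspace] .
  have Xsub: "e.subspace ?X" using Nsub .
  have Mfin: "?M \<subseteq> e.span (W2 (bW \<union> g ` bC))"
    using Lam2_fin[of ?Z "bW \<union> g ` bC"] ZD_U[OF D(2)] UU_span by auto
  have Xfin: "?X \<subseteq> e.span (W2 (bB \<union> bC))"
    using Lam2_fin[of "ssum B D" "bB \<union> bC"] BD_A[OF D(2)] spA by auto
  have fin1: "finite (W2 (bW \<union> g ` bC))" using W2_finite fbW fbC by simp
  have fin2: "finite (W2 (bB \<union> bC))" using W2_finite fbB fbC by simp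
  have rdl: "Vector_Spaces.linear esc esc (r \<circ> der g)" using Vector_Spaces.linear_compose[OF derl rl] .
  have RN1: "e.dim ?M = e.dim (r ` ?M) + e.dim {x \<in> ?M. r x = 0}"
    using e.rank_nullity[OF rl Msub fin1 Mfin] .
  have RN2: "e.dim ?X = e.dim ((r \<circ> der g) ` ?X) + e.dim {x \<in> ?X. (r \<circ> der g) x = 0}"
    using e.rank_nullity[OF rdl Xsub fin2 Xfin] .
  have WZ: "WW \<subseteq> ?Z"
  proof
    fix w assume "w \<in> WW" then have "w + g 0 \<in> ?Z" using D(1) by (intro ssumI) (auto simp: vs.subspace_0)
    then show "w \<in> ?Z" by (simp add: g0)
  qed
  have K1: "{x \<in> ?M. r x = 0} = NV \<inter> Lam2 sc WW"
  proof
    show "{x \<in> ?M. r x = 0} \<subseteq> NV \<inter> Lam2 sc WW"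
    proof
      fix x assume x: "x \<in> {x \<in> ?M. r x = 0}"
      then have "x \<in> Lam2 sc WW" using r0[of x ?Z] by auto
      then show "x \<in> NV \<inter> Lam2 sc WW" using x NU_W by auto
    qed
    show "NV \<inter> Lam2 sc WW \<subseteq> {x \<in> ?M. r x = 0}"
    proof
      fix x assume x: "x \<in> NV \<inter> Lam2 sc WW"
      then have "r x = 0" using r0[of x WW] by auto
      then show "x \<in> {x \<in> ?M. r x = 0}" using x NU_W Lam2_mono[OF WZ] by auto
    qed
  qed
  have BBD: "B \<subseteq> ssum B D"
  proof
    fix b assume "b \<in> B" then have "b + 0 \<in> ssum B D" using D(1) by (intro ssumI) (auto simp: vs.subspace_0)
    then show "b \<in> ssum B D" by simp
  qed
  have LA: "Lam2 sc (ssum B D) \<subseteq> Lam2 sc A" using Lam2_mono BD_A[OF D(2)] .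
  have K2: "{x \<in> ?X. (r \<circ> der g) x = 0} = NV \<inter> Lam2 sc B"
  proof
    show "{x \<in> ?X. (r \<circ> der g) x = 0} \<subseteq> NV \<inter> Lam2 sc B"
    proof
      fix n assume n: "n \<in> {x \<in> ?X. (r \<circ> der g) x = 0}"
      then have "der g n \<in> Lam2 sc ?Z" using KL'[OF D] by auto
      then have "der g n \<in> Lam2 sc WW" using r0[of "der g n" ?Z] n by auto
      then show "n \<in> NV \<inter> Lam2 sc B" using KL0 n LA by auto
    qed
    show "NV \<inter> Lam2 sc B \<subseteq> {x \<in> ?X. (r \<circ> der g) x = 0}"
    proof
      fix n assume n: "n \<in> NV \<inter> Lam2 sc B"
      then have "der g n \<in> Lam2 sc WW" using KL0' by auto
      then have "r (der g n) = 0" using r0[of "der g n" WW] by blast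
      then show "n \<in> {x \<in> ?X. (r \<circ> der g) x = 0}" using n Lam2_mono[OF BBD] by auto
    qed
  qed
  have I: "r ` ?M = (r \<circ> der g) ` ?X"
  proof
    show "r ` ?M \<subseteq> (r \<circ> der g) ` ?X"
    proof
      fix y assume "y \<in> r ` ?M"
      then obtain m where m: "m \<in> ?M" "y = r m" by auto
      then obtain w n where wn: "w \<in> NV \<inter> Lam2 sc WW" "n \<in> NV \<inter> Lam2 sc A" "m = w + der g n"
        by (auto simp: NU_def elim!: ssumE)
      have "m - w \<in> Lam2 sc ?Z"
        using m wn Lam2_mono[OF WZ] e.subspace_diff[OF Lam2_subspace] by blast
      then have "der g n \<in> Lam2 sc ?Z" using wn(3) by simp
      then have "n \<in> ?X" using KL[OF D] wn by auto
      moreover have "r w = 0" using r0[of w WW] wn by blast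
      then have "y = r (der g n)" using m wn ee.linear_add[OF rl] by simp
      ultimately show "y \<in> (r \<circ> der g) ` ?X" by auto
    qed
    show "(r \<circ> der g) ` ?X \<subseteq> r ` ?M"
    proof
      fix y assume "y \<in> (r \<circ> der g) ` ?X"
      then obtain n where n: "n \<in> ?X" "y = r (der g n)" by auto
      have "0 + der g n \<in> NU" unfolding NU_def using n LA e.subspace_0[OF Nsub] by (intro ssumI) auto
      moreover have "der g n \<in> Lam2 sc ?Z" using KL'[OF D] n by auto
      ultimately show "y \<in> r ` ?M" using n by auto
    qed
  qed
  have E1: "e.dim ?M = e.dim ((r \<circ> der g) ` ?X) + e.dim (NV \<inter> Lam2 sc WW)"
    using RN1 unfolding K1 I .
  have E2: "e.dim ?X = e.dim ((r \<circ> der g) ` ?X) + e.dim (NV \<inter> Lam2 sc B)"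
    using RN2 unfolding K2 .
  show ?thesis using E1 E2 by linarith
qed


lemma dimZD:
  assumes D: "vs.subspace D" "D \<subseteq> CC"
  shows "int (vs.dim (ssum WW (g ` D))) - int (vs.dim WW) = int (vs.dim (ssum B D)) - int (vs.dim B)"
proof -
  obtain bD where bD: "bD \<subseteq> D" "vs.independent bD" "D \<subseteq> vs.span bD"
    using vs.maximal_independent_subset by blast
  have spD: "vs.span bD = D" using vs.span_subspace[OF bD(1) bD(3) D(1)] .
  have bDC: "bD \<subseteq> CC" using bD(1) D(2) by auto
  have fbD: "finite bD" using vs.independent_span_bound[OF fbC bD(2)] bDC by (auto simp: CC_def)
  have GW: "vs.independent (bW \<union> g ` bD)" "bW \<inter> g ` bD = {}" "inj_on g bD"
    using GENW[OF bDC bD(2)] by auto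
  have GB: "vs.independent (bB \<union> bD)" "bB \<inter> bD = {}" using GENB[OF bDC bD(2)] by auto
  have Z: "ssum WW (g ` D) = vs.span (bW \<union> g ` bD)"
    using span_ssum[of bW "g ` bD"] spW' g_span[of bD] spD by simp
  have BDs: "ssum B D = vs.span (bB \<union> bD)"
    using span_ssum[of bB bD] spB spD by simp
  have d1: "vs.dim (ssum WW (g ` D)) = card bW + card bD"
    using vs.dim_union_indep[OF GW(1) GW(2) fbW] fbD card_image[OF GW(3)] Z by simp
  have d2: "vs.dim (ssum B D) = card bB + card bD"
    using vs.dim_union_indep[OF GB(1) GB(2) fbB fbD] BDs by simp
  have d3: "vs.dim B = card bB"
    using vs.dim_eq_card_independent[of bB] indBC vs.independent_mono[of "bB \<union> bC" bB] spB vs.dim_span[of bB]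
    by auto
  show ?thesis using d1 d2 d3 dimW by simp
qed

lemma DELTA:
  assumes D: "vs.subspace D" "D \<subseteq> CC"
  shows "delta sc NU (ssum WW (g ` D)) WW = delta sc NV (ssum B D) B"
  using dimZD[OF D] DIMN[OF D] NU_W unfolding delta_def Nof_def by simp

lemma Zcorr:
  assumes Z: "vs.subspace Z" "WW \<subseteq> Z" "Z \<subseteq> UU"
  defines "D \<equiv> CC \<inter> g -` Z"
  shows "vs.subspace D" "D \<subseteq> CC" "Z = ssum WW (g ` D)"
proof -
  show "vs.subspace D" unfolding D_def
    using vs.subspace_inter[OF CCsub vv.linear_subspace_vimage[OF glin Z(1)]] .
  show "D \<subseteq> CC" by (auto simp: D_def)
  show "Z = ssum WW (g ` D)"
  proof
    show "ssum WW (g ` D) \<subseteq> Z"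
      using Z vs.subspace_add[OF Z(1)] by (auto simp: ssum_def D_def)
    show "Z \<subseteq> ssum WW (g ` D)"
    proof
      fix z assume z: "z \<in> Z"
      then have "z \<in> UU" using Z by auto
      then obtain a a' where aa: "a \<in> A" "a' \<in> A" "z = a + g a'" by (auto simp: UU_def elim!: ssumE)
      then obtain b c where bc: "b \<in> B" "c \<in> CC" "a' = b + c" using A_eq by (auto elim: ssumE)
      have w: "a + g b \<in> WW" unfolding WW_def using aa bc by (intro ssumI) auto
      have ze: "z = (a + g b) + g c" using aa bc gadd by (simp add: add.assoc)
      have "g c = z - (a + g b)" using ze by simp
      then have "g c \<in> Z" using vs.subspace_diff[OF Z(1) z] w Z(2) by auto
      then have "c \<in> D" using bc by (auto simp: D_def)
      then show "z \<in> ssum WW (g ` D)" using ze w by (auto intro: ssumI)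
    qed
  qed
qed

lemma S1:
  assumes sBA: "strong sc NV B A"
  shows "strong sc NU WW UU"
  unfolding strong_def
proof (intro conjI allI impI)
  show "WW \<subseteq> UU" by (rule WU)
  fix Z assume Z: "vs.subspace Z \<and> WW \<subseteq> Z \<and> Z \<subseteq> UU"
  define D where "D = CC \<inter> g -` Z"
  have D: "vs.subspace D" "D \<subseteq> CC" "Z = ssum WW (g ` D)" using Zcorr[of Z] Z by (auto simp: D_def)
  have "delta sc NU Z WW = delta sc NV (ssum B D) B" using DELTA[OF D(1,2)] D(3) by simp
  moreover have "B \<subseteq> ssum B D"
  proof
    fix b assume "b \<in> B" then have "b + 0 \<in> ssum B D" using D(1) by (intro ssumI) (auto simp: vs.subspace_0)
    then show "b \<in> ssum B D" by simp
  qed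
  ultimately show "0 \<le> delta sc NU Z WW"
    using sBA BD_sub[OF D(1)] BD_A[OF D(2)] unfolding strong_def by auto
qed

lemma delta_trans: "delta sc N X Z = delta sc N X Y - delta sc N Z Y"
  by (simp add: delta_def)


lemma B_sub_BD: "vs.subspace D \<Longrightarrow> B \<subseteq> ssum B D"
proof
  fix b assume "vs.subspace D" "b \<in> B" then have "b + 0 \<in> ssum B D" by (intro ssumI) (auto simp: vs.subspace_0)
  then show "b \<in> ssum B D" by simp
qed

lemma D_sub_BD: "d \<in> D \<Longrightarrow> d \<in> ssum B D"
  using ssumI[of 0 B d D] Bsub by (simp add: vs.subspace_0)

lemma W_sub_ZD: "vs.subspace D \<Longrightarrow> WW \<subseteq> ssum WW (g ` D)"
proof
  fix w assume "vs.subspace D" "w \<in> WW" then have "w + g 0 \<in> ssum WW (g ` D)" by (intro ssumI) (auto simp: vs.subspace_0)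
  then show "w \<in> ssum WW (g ` D)" by (simp add: g0)
qed

lemma S2:
  assumes sBA: "strong sc NV B A" and ms: "minimal_strong sc NV B A"
  shows "minimal_strong sc NU WW UU"
  unfolding minimal_strong_def
proof (intro conjI)
  show "strong sc NU WW UU" by (rule S1[OF sBA])
  have BneA: "B \<noteq> A" using ms by (simp add: minimal_strong_def)
  show "WW \<noteq> UU"
  proof
    assume "WW = UU"
    then have "card bC = 0" using free by (simp add: WW_def UU_def)
    then have "bC = {}" using fbC by simp
    then show False using BneA spA spB by simp
  qed
  show "\<not> (\<exists>Z. vs.subspace Z \<and> WW \<subset> Z \<and> Z \<subset> UU \<and> strong sc NU Z UU)"
  proof
    assume "\<exists>Z. vs.subspace Z \<and> WW \<subset> Z \<and> Z \<subset> UU \<and> strong sc NU Z UU"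
    then obtain Z where Z: "vs.subspace Z" "WW \<subset> Z" "Z \<subset> UU" "strong sc NU Z UU" by blast
    define D where "D = CC \<inter> g -` Z"
    have D: "vs.subspace D" "D \<subseteq> CC" "Z = ssum WW (g ` D)"
      using Zcorr[of Z] Z by (auto simp: D_def)
    let ?BD = "ssum B D"
    have BDA: "?BD \<subseteq> A" using BD_A[OF D(2)] .
    obtain d where d: "d \<in> D" "d \<noteq> 0"
    proof (rule ccontr)
      assume "\<not> thesis"
      then have "\<forall>d\<in>D. d = 0" using that by blast
      then have "Z \<subseteq> WW" using D(3) by (auto simp: ssum_def g0)
      then show False using Z(2) by auto
    qed
    have "d \<notin> B" using BC0[of d] d D(2) by auto
    then have BBD: "B \<subset> ?BD" using B_sub_BD[OF D(1)] D_sub_BD[OF d(1)] by auto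
    have BDneA: "?BD \<noteq> A"
    proof
      assume eq: "?BD = A"
      have CD: "CC \<subseteq> D"
      proof
        fix c assume c: "c \<in> CC"
        then have "c \<in> ?BD" using eq CA by auto
        then obtain b d' where bd: "b \<in> B" "d' \<in> D" "c = b + d'" by (auto elim: ssumE)
        have "b = c - d'" using bd by simp
        then have "b \<in> CC" using vs.subspace_diff[OF CCsub c] bd(2) D(2) by auto
        then have "b = 0" using BC0 bd(1) by auto
        then show "c \<in> D" using bd by simp
      qed
      have "UU \<subseteq> Z"
      proof
        fix u assume "u \<in> UU"
        then obtain a a' where aa: "a \<in> A" "a' \<in> A" "u = a + g a'" by (auto simp: UU_def elim!: ssumE)
        then obtain b c where bc: "b \<in> B" "c \<in> CC" "a' = b + c" using A_eq by (auto elim: ssumE)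
        have w: "a + g b \<in> WW" unfolding WW_def using aa bc by (intro ssumI) auto
        have ze: "u = (a + g b) + g c" using aa bc gadd by (simp add: add.assoc)
        then show "u \<in> Z" using D(3) w CD bc(2) by (auto intro: ssumI)
      qed
      then show False using Z(3) by auto
    qed
    have "strong sc NV ?BD A"
      unfolding strong_def
    proof (intro conjI allI impI)
      show "?BD \<subseteq> A" by (rule BDA)
      fix Y assume Y: "vs.subspace Y \<and> ?BD \<subseteq> Y \<and> Y \<subseteq> A"
      define E where "E = CC \<inter> Y"
      have E: "vs.subspace E" "E \<subseteq> CC" unfolding E_def using vs.subspace_inter[OF CCsub] Y by auto
      have YE: "Y = ssum B E"
      proof
        show "ssum B E \<subseteq> Y"
        proof
          fix z assume "z \<in> ssum B E"
          then obtain b e where be: "b \<in> B" "e \<in> E" "z = b + e" by (auto elim: ssumE)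
          have "b \<in> Y" using be(1) B_sub_BD[OF D(1)] Y by auto
          then show "z \<in> Y" using be vs.subspace_add[of Y b e] Y by (auto simp: E_def)
        qed
        show "Y \<subseteq> ssum B E"
        proof
          fix y assume y: "y \<in> Y"
          have "y \<in> ssum B CC" using y Y A_eq by auto
          then obtain b c where bc: "b \<in> B" "c \<in> CC" "y = b + c" by (auto elim: ssumE)
          have "b \<in> Y" using bc(1) B_sub_BD[OF D(1)] Y by auto
          then have "c \<in> Y" using vs.subspace_diff[of Y y b] Y y bc by auto
          then show "y \<in> ssum B E" using bc by (auto simp: E_def intro: ssumI)
        qed
      qed
      have DE: "D \<subseteq> E" using D(2) Y D_sub_BD by (auto simp: E_def)
      let ?Z' = "ssum WW (g ` E)"
      have Z': "vs.subspace ?Z'" "Z \<subseteq> ?Z'" "?Z' \<subseteq> UU"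
        using ZD_sub[OF E(1)] D(3) DE ZD_U[OF E(2)] by (auto simp: ssum_def)
      have "0 \<le> delta sc NU ?Z' Z" using Z(4) Z' unfolding strong_def by blast
      also have "delta sc NU ?Z' Z = delta sc NU ?Z' WW - delta sc NU Z WW" by (rule delta_trans)
      also have "\<dots> = delta sc NV (ssum B E) B - delta sc NV ?BD B"
        using DELTA[OF E] DELTA[OF D(1,2)] D(3) by simp
      also have "\<dots> = delta sc NV Y ?BD" using YE delta_trans[of NV Y ?BD B] by simp
      finally show "0 \<le> delta sc NV Y ?BD" .
    qed
    then show False using ms BD_sub[OF D(1)] BBD BDA BDneA unfolding minimal_strong_def by blast
  qed
qed

end


lemma linear_on_agree:
  assumes vs: "vector_space sc" and A: "module.subspace sc A" and f: "linear_on sc A f"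
    and g: "Vector_Spaces.linear sc sc g" and bA: "bA \<subseteq> A" "A \<subseteq> module.span sc bA"
    and eq: "\<forall>x\<in>bA. g x = f x"
  shows "\<forall>x\<in>A. f x = g x"
proof -
  interpret ctx sc using vs by (simp add: ctx_def)
  have f0: "f 0 = 0"
  proof -
    have "f (0 + 0) = f 0 + f 0" using f vs.subspace_0[OF A] unfolding linear_on_def by blast
    then show ?thesis by simp
  qed
  have "x \<in> A \<and> f x = g x" if x: "x \<in> A" for x
  proof (rule vs.span_induct[of x bA "\<lambda>x. x \<in> A \<and> f x = g x"])
    show "x \<in> vs.span bA" using x bA by auto
    show "vs.subspace {x. x \<in> A \<and> f x = g x}"
    proof (rule vs.subspaceI)
      show "0 \<in> {x. x \<in> A \<and> f x = g x}" using f0 vv.linear_0[OF g] vs.subspace_0[OF A] by simp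
      fix x y c assume "x \<in> {x. x \<in> A \<and> f x = g x}" "y \<in> {x. x \<in> A \<and> f x = g x}"
      then show "x + y \<in> {x. x \<in> A \<and> f x = g x}"
        using f vv.linear_add[OF g] vs.subspace_add[OF A] unfolding linear_on_def by auto
    next
      fix x c assume "x \<in> {x. x \<in> A \<and> f x = g x}"
      then show "sc c x \<in> {x. x \<in> A \<and> f x = g x}"
        using f vv.linear_scale[OF g] vs.subspace_scale[OF A] unfolding linear_on_def by auto
    qed
  qed (use eq bA in auto)
  then show ?thesis by blast
qed

theorem corollary3p5:
  fixes sc :: "'a::{field,finite} \<Rightarrow> 'v::ab_group_add \<Rightarrow> 'v"
    and V A B :: "'v set"
    and NV :: "('a, 'v) ext2 set"
    and f :: "'v \<Rightarrow> 'v"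
  assumes vs: "vector_space sc"
    and V: "module.subspace sc V"
    and NV: "module.subspace esc NV" "NV \<subseteq> Lam2 sc V"
    and B: "module.subspace sc B" and A: "module.subspace sc A"
    and BA: "B \<subseteq> A" and AV: "A \<subseteq> V" and finA: "fin_dim sc A"
    and fB: "f ` B \<subseteq> V"
    and f_lin: "linear_on sc A f"
    and f_der: "tilde sc f B ` Nof sc NV B \<subseteq> NV"
    and strongBA: "strong sc NV B A"
    and free: "int (vector_space.dim sc (ssum A (f ` A))) - int (vector_space.dim sc (ssum A (f ` B)))
               = int (vector_space.dim sc A) - int (vector_space.dim sc B)"
  defines "NU \<equiv> ssum (Nof sc NV (ssum A (f ` B))) (tilde sc f A ` Nof sc NV A)"
  shows "strong sc NU (ssum A (f ` B)) (ssum A (f ` A))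
       \<and> (minimal_strong sc NV B A \<longrightarrow> minimal_strong sc NU (ssum A (f ` B)) (ssum A (f ` A)))"
proof -
  interpret ctx sc using vs by (simp add: ctx_def)
  obtain S where S: "finite S" "A = vs.span S" using finA unfolding fin_dim_def by blast
  obtain bB where bB: "bB \<subseteq> B" "vs.independent bB" "B \<subseteq> vs.span bB"
    using vs.maximal_independent_subset by blast
  obtain bA where bA: "bB \<subseteq> bA" "bA \<subseteq> A" "vs.independent bA" "A \<subseteq> vs.span bA"
    using vs.maximal_independent_subset_extend[of bB A] bB BA by blast
  have fbA: "finite bA" using vs.independent_span_bound[OF S(1) bA(3)] bA(2) S(2) by auto
  have fbB: "finite bB" using finite_subset[OF bA(1) fbA] .
  define bC where "bC = bA - bB"
  have bAC: "bA = bB \<union> bC" using bA(1) by (auto simp: bC_def)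
  have spB: "vs.span bB = B" using vs.span_subspace[OF bB(1) bB(3) B] .
  have spA: "vs.span bA = A" using vs.span_subspace[OF bA(2) bA(4) A] .
  obtain g where g: "Vector_Spaces.linear sc sc g" "\<forall>x\<in>bA. g x = f x"
    using vv.linear_independent_extend[OF bA(3), of f] by blast
  have fg: "\<forall>x\<in>A. f x = g x" using linear_on_agree[OF vs A f_lin g(1) bA(2) bA(4) g(2)] .
  have fgB: "\<forall>x\<in>B. f x = g x" using fg BA by auto
  have imA: "f ` A = g ` A" and imB: "f ` B = g ` B" using fg fgB by (auto intro!: image_cong)
  have fder: "der g n \<in> NV" if "n \<in> NV" "n \<in> Lam2 sc B" for n
    using f_der that tilde_eq[OF g(1) fgB, of n] by (auto simp: Nof_def)
  let ?W = "ssum A (g ` B)"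
  have Wsub: "vs.subspace ?W"
    using vs.subspace_sums[OF A vv.linear_subspace_image[OF g(1) B]] by (simp add: ssum_def)
  obtain bW where bW: "bW \<subseteq> ?W" "vs.independent bW" "?W \<subseteq> vs.span bW"
    using vs.maximal_independent_subset by blast
  have WT: "?W \<subseteq> vs.span (bA \<union> g ` bA)"
  proof
    fix x assume "x \<in> ?W"
    then obtain a b where ab: "a \<in> A" "b \<in> B" "x = a + g b" by (auto elim: ssumE)
    have "a \<in> vs.span (bA \<union> g ` bA)" using ab(1) spA vs.span_mono[of bA "bA \<union> g ` bA"] by auto
    moreover have "g b \<in> g ` vs.span bA" using ab(2) BA spA by auto
    then have "g b \<in> vs.span (g ` bA)" using vv.linear_span_image[OF g(1)] by simp
    then have "g b \<in> vs.span (bA \<union> g ` bA)" using vs.span_mono[of "g ` bA" "bA \<union> g ` bA"] by auto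
    ultimately show "x \<in> vs.span (bA \<union> g ` bA)" using ab(3) vs.span_add by auto
  qed
  have fbW: "finite bW"
    using vs.independent_span_bound[of "bA \<union> g ` bA" bW] fbA bW WT by auto
  have spW: "vs.span bW = ?W" using vs.span_subspace[OF bW(1) bW(3) Wsub] .
  have cards: "card bA = card bB + card bC"
    using bAC fbA by (simp add: bC_def card_Diff_subset[OF fbB bA(1)] card_mono[OF fbA bA(1)])
  have dA: "vs.dim A = card bA" using vs.dim_eq_card_independent[OF bA(3)] spA vs.dim_span[of bA] by simp
  have dB: "vs.dim B = card bB" using vs.dim_eq_card_independent[OF bB(2)] spB vs.dim_span[of bB] by simp
  have free': "int (vs.dim (ssum A (g ` A))) - int (vs.dim (ssum A (g ` B))) = int (card bC)"
    using free imA imB dA dB cards by simp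
  interpret St: stp sc A B bB bC bW g NV
  proof (rule stp.intro)
    show "ctx sc" using vs by (simp add: ctx_def)
  next
  show "stp_axioms sc A B bB bC bW g NV"
  proof (rule stp_axioms.intro)
    show "vs.subspace A" by (rule A)
    show "vs.subspace B" by (rule B)
    show "finite bB" by (rule fbB)
    show "finite bC" using fbA by (simp add: bC_def)
    show "vs.independent (bB \<union> bC)" using bA(3) bAC by simp
    show "bB \<inter> bC = {}" by (auto simp: bC_def)
    show "vs.span bB = B" by (rule spB)
    show "vs.span (bB \<union> bC) = A" using spA bAC by simp
    show "Vector_Spaces.linear sc sc g" by (rule g(1))
    show "e.subspace NV" by (rule NV(1))
    show "\<And>n. n \<in> NV \<Longrightarrow> n \<in> Lam2 sc B \<Longrightarrow> der g n \<in> NV" by (rule fder)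
    show "finite bW" by (rule fbW)
    show "vs.independent bW" by (rule bW(2))
    show "vs.span bW = ?W" by (rule spW)
    show "int (vs.dim (ssum A (g ` A))) - int (vs.dim ?W) = int (card bC)" by (rule free')
  qed
  qed
  have NUeq: "NU = St.NU"
  proof -
    have "tilde sc f A ` (NV \<inter> Lam2 sc A) = der g ` (NV \<inter> Lam2 sc A)"
      using tilde_eq[OF g(1) fg] by (auto intro!: image_cong)
    then show ?thesis by (simp add: NU_def St.NU_def Nof_def St.WW_def imB)
  qed
  have WWeq: "ssum A (f ` B) = St.WW" by (simp add: St.WW_def imB)
  have UUeq: "ssum A (f ` A) = St.UU" by (simp add: St.UU_def imA)
  show ?thesis unfolding NUeq WWeq UUeq using St.S1[OF strongBA] St.S2[OF strongBA] by blast
qed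

end
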